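(* Let $\mathbb{K}$ be a field, let $\{i,j,k\}=\{1,2,3\}$, let $R=\mathbb{K}[x_i,x_j,x_k]$ with homogeneous maximal ideal $\mathfrak{m}=\langle x_i,x_j,x_k\rangle$, and let $I\subseteq R$ be a support-$2$ monomial ideal such that $G(I)$ is the $3$-cycle on $x_i,x_j,x_k$. Then: (a) if $\alpha_{i,j}\ge 2$ and $\alpha_{j,k}\ge 2$, then $\mathfrak{m}\in\mathrm{Ass}(I)$; (b) if $\alpha_{i,k}=\alpha_{j,k}=1$ and $\alpha_{i,j}\ge 2$, then $\mathfrak{m}\notin\mathrm{Ass}(I)$ if and only if $w^1_{i,k}\ge\mu_{i,j}$ and $w^1_{j,k}\ge\mu_{j,i}$.
   Context: For a monomial ideal $I$, $\mathcal{G}(I)$ denotes its minimal set of monomial generators. $I$ is a support-$2$ monomial ideal if every element of $\mathcal{G}(I)$ has the form $x_a^{p}x_b^{q}$ with $a\neq b$ and $p,q\ge 1$. The underlying simple graph $G(I)$ has an edge $\{x_a,x_b\}$ whenever some element of $\mathcal{G}(I)$ has support $\{x_a,x_b\}$. For an edge $\{x_a,x_b\}$, $\alpha_{a,b}=\alpha_{b,a}$ is the number of elements of $\mathcal{G}(I)$ with support exactly $\{x_a,x_b\}$, and $\mu_{a,b}$ is the maximum exponent of $x_a$ among them. When $\alpha_{a,b}=1$, $w^1_{a,b}$ denotes the exponent of $x_a$ in the unique element of $\mathcal{G}(I)$ with support $\{x_a,x_b\}$. $\mathrm{Ass}(I)$ is the set of associated primes of $R/I$. *)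

theory Defs
  imports Main "HOL-Library.Poly_Mapping"
begin

text \<open>Polynomial ring K[x_v : v in 'v] represented as finitely supported maps from
exponent vectors ('v =>0 nat) to coefficients.\<close>

type_synonym ('v, 'k) mpoly = "('v \<Rightarrow>\<^sub>0 nat) \<Rightarrow>\<^sub>0 'k"

definition monom :: "('v \<Rightarrow>\<^sub>0 nat) \<Rightarrow> ('v, 'k::field) mpoly" where
  "monom e = Poly_Mapping.single e 1"

definition var :: "'v \<Rightarrow> ('v, 'k::field) mpoly" where
  "var a = monom (Poly_Mapping.single a 1)"

definition gen_ideal :: "'a::comm_ring_1 set \<Rightarrow> 'a set" where
  "gen_ideal S = {(\<Sum>s\<in>F. c s * s) | F c. finite F \<and> F \<subseteq> S}"

definition is_ideal :: "'a::comm_ring_1 set \<Rightarrow> bool" where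
  "is_ideal I \<longleftrightarrow> 0 \<in> I \<and> (\<forall>a\<in>I. \<forall>b\<in>I. a + b \<in> I) \<and> (\<forall>r. \<forall>a\<in>I. r * a \<in> I)"

definition prime_ideal :: "'a::comm_ring_1 set \<Rightarrow> bool" where
  "prime_ideal P \<longleftrightarrow> is_ideal P \<and> P \<noteq> UNIV \<and> (\<forall>a b. a * b \<in> P \<longrightarrow> a \<in> P \<or> b \<in> P)"

text \<open>Associated primes of R/I: prime ideals of the form (I : f).\<close>
definition Ass :: "'a::comm_ring_1 set \<Rightarrow> 'a set set" where
  "Ass I = {P. prime_ideal P \<and> (\<exists>f. P = {g. g * f \<in> I})}"

definition mdvd :: "('v \<Rightarrow>\<^sub>0 nat) \<Rightarrow> ('v \<Rightarrow>\<^sub>0 nat) \<Rightarrow> bool" where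
  "mdvd e f \<longleftrightarrow> (\<forall>v. Poly_Mapping.lookup e v \<le> Poly_Mapping.lookup f v)"

text \<open>G is the minimal monomial generating set of the monomial ideal it generates:
a finite antichain under divisibility.\<close>
definition minimal_gens :: "('v \<Rightarrow>\<^sub>0 nat) set \<Rightarrow> bool" where
  "minimal_gens G \<longleftrightarrow> finite G \<and> (\<forall>e\<in>G. \<forall>f\<in>G. mdvd e f \<longrightarrow> e = f)"

definition support2 :: "('v \<Rightarrow>\<^sub>0 nat) set \<Rightarrow> bool" where
  "support2 G \<longleftrightarrow> (\<forall>e\<in>G. card (Poly_Mapping.keys e) = 2)"

definition monomial_ideal :: "('v \<Rightarrow>\<^sub>0 nat) set \<Rightarrow> ('v, 'k::field) mpoly set" where
  "monomial_ideal G = gen_ideal (monom ` G)"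

definition edges :: "('v \<Rightarrow>\<^sub>0 nat) set \<Rightarrow> 'v set set" where
  "edges G = Poly_Mapping.keys ` G"

definition alpha :: "('v \<Rightarrow>\<^sub>0 nat) set \<Rightarrow> 'v \<Rightarrow> 'v \<Rightarrow> nat" where
  "alpha G a b = card {e\<in>G. Poly_Mapping.keys e = {a, b}}"

definition mu :: "('v \<Rightarrow>\<^sub>0 nat) set \<Rightarrow> 'v \<Rightarrow> 'v \<Rightarrow> nat" where
  "mu G a b = Max {Poly_Mapping.lookup e a | e. e \<in> G \<and> Poly_Mapping.keys e = {a, b}}"

definition w1 :: "('v \<Rightarrow>\<^sub>0 nat) set \<Rightarrow> 'v \<Rightarrow> 'v \<Rightarrow> nat" where
  "w1 G a b = Poly_Mapping.lookup (THE e. e \<in> G \<and> Poly_Mapping.keys e = {a, b}) a"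

definition max_ideal :: "'v set \<Rightarrow> ('v, 'k::field) mpoly set" where
  "max_ideal V = gen_ideal (var ` V)"

end

theory Submission
  imports Defs
begin

definition divG :: "('v \<Rightarrow>\<^sub>0 nat) set \<Rightarrow> ('v \<Rightarrow>\<^sub>0 nat) \<Rightarrow> bool" where
  "divG G u \<longleftrightarrow> (\<exists>h\<in>G. mdvd h u)"

lemma mdvd_trans: "mdvd a b \<Longrightarrow> mdvd b c \<Longrightarrow> mdvd a c"
  unfolding mdvd_def using le_trans by blast

lemma mdvd_add: "mdvd a b \<Longrightarrow> mdvd a (b + c)"
  unfolding mdvd_def by (simp add: lookup_add trans_le_add1)

lemma mdvd_add2: "mdvd a b \<Longrightarrow> mdvd a (c + b)"
  unfolding mdvd_def by (simp add: lookup_add trans_le_add2)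

lemma divG_mono: "divG G a \<Longrightarrow> mdvd a b \<Longrightarrow> divG G b"
  unfolding divG_def using mdvd_trans by blast

lemma gen_ideal_sub:
  assumes J: "is_ideal J" and S: "S \<subseteq> J"
  shows "gen_ideal S \<subseteq> J"
proof
  fix x assume "x \<in> gen_ideal S"
  then obtain F c where x: "x = (\<Sum>s\<in>F. c s * s)" and F: "finite F" "F \<subseteq> S"
    unfolding gen_ideal_def by blast
  have "F \<subseteq> S \<longrightarrow> (\<Sum>s\<in>F. c s * s) \<in> J" using F(1)
  proof (induction F rule: finite_induct)
    case empty then show ?case using J unfolding is_ideal_def by simp
  next
    case (insert a F)
    then show ?case using J S unfolding is_ideal_def by auto
  qed
  then show "x \<in> J" using x F by blast
qed

lemma is_ideal_gen: "is_ideal (gen_ideal S)"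
  unfolding is_ideal_def
proof (intro conjI ballI allI)
  show "0 \<in> gen_ideal S" unfolding gen_ideal_def
    by (rule CollectI, rule exI[of _ "{}"], auto)
next
  fix a b assume a: "a \<in> gen_ideal S" and b: "b \<in> gen_ideal S"
  from a obtain F1 c1 where a': "a = (\<Sum>s\<in>F1. c1 s * s)" "finite F1" "F1 \<subseteq> S"
    unfolding gen_ideal_def by blast
  from b obtain F2 c2 where b': "b = (\<Sum>s\<in>F2. c2 s * s)" "finite F2" "F2 \<subseteq> S"
    unfolding gen_ideal_def by blast
  define c where "c s = (if s \<in> F1 then c1 s else 0) + (if s \<in> F2 then c2 s else 0)" for s
  have "(\<Sum>s\<in>F1 \<union> F2. c s * s) = (\<Sum>s\<in>F1 \<union> F2. (if s \<in> F1 then c1 s * s else 0))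
      + (\<Sum>s\<in>F1 \<union> F2. (if s \<in> F2 then c2 s * s else 0))"
    unfolding sum.distrib[symmetric] by (rule sum.cong) (auto simp: c_def distrib_right)
  also have "\<dots> = a + b"
    using a' b' by (simp add: sum.If_cases Int_absorb1 Int_absorb2 Int_commute Un_Int_eq)
  finally show "a + b \<in> gen_ideal S" unfolding gen_ideal_def using a' b'
    by (intro CollectI exI[of _ "F1 \<union> F2"] exI[of _ c]) auto
next
  fix r a assume a: "a \<in> gen_ideal S"
  from a obtain F c where a': "a = (\<Sum>s\<in>F. c s * s)" "finite F" "F \<subseteq> S"
    unfolding gen_ideal_def by blast
  have "r * a = (\<Sum>s\<in>F. (r * c s) * s)" using a' by (simp add: sum_distrib_left mult.assoc)
  then show "r * a \<in> gen_ideal S" unfolding gen_ideal_def using a'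
    by (intro CollectI exI[of _ F] exI[of _ "\<lambda>s. r * c s"]) auto
qed

lemma gen_ideal_base: "s \<in> S \<Longrightarrow> s \<in> gen_ideal S"
  unfolding gen_ideal_def
  by (rule CollectI, rule exI[of _ "{s}"], rule exI[of _ "\<lambda>_. 1"], auto)

lemma ideal_sum:
  assumes J: "is_ideal J" and fin: "finite A" and f: "\<And>x. x \<in> A \<Longrightarrow> f x \<in> J"
  shows "sum f A \<in> J"
  using fin f
proof (induction A rule: finite_induct)
  case empty then show ?case using J unfolding is_ideal_def by simp
next
  case (insert a F) then show ?case using J unfolding is_ideal_def by auto
qed

lemma poly_sum_rep: "p = (\<Sum>e\<in>Poly_Mapping.keys p. Poly_Mapping.single e (Poly_Mapping.lookup p e))"
  by (rule poly_mapping_eqI)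
     (simp add: lookup_sum lookup_single when_def sum.delta in_keys_iff)

lemma mem_monomial_ideal:
  "(p :: ('v,'k::field) mpoly) \<in> monomial_ideal G \<longleftrightarrow> (\<forall>e\<in>Poly_Mapping.keys p. divG G e)"
proof
  let ?J = "{p :: ('v,'k) mpoly. \<forall>e\<in>Poly_Mapping.keys p. divG G e}"
  have "is_ideal ?J" unfolding is_ideal_def
  proof (intro conjI ballI allI)
    show "0 \<in> ?J" by simp
  next
    fix a b assume "a \<in> ?J" "b \<in> ?J" then show "a + b \<in> ?J"
      using keys_add[of a b] by blast
  next
    fix r a assume a: "a \<in> ?J"
    show "r * a \<in> ?J"
    proof (rule CollectI, rule ballI)
      fix e assume "e \<in> Poly_Mapping.keys (r * a)"
      then obtain x y where "e = x + y" "y \<in> Poly_Mapping.keys a" using keys_mult by blast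
      then show "divG G e" using a unfolding divG_def using mdvd_add2 by blast
    qed
  qed
  moreover have "monom ` G \<subseteq> ?J"
    by (auto simp: monom_def divG_def mdvd_def)
  ultimately have "monomial_ideal G \<subseteq> ?J" unfolding monomial_ideal_def by (rule gen_ideal_sub)
  then show "p \<in> monomial_ideal G \<Longrightarrow> \<forall>e\<in>Poly_Mapping.keys p. divG G e" by blast
next
  assume H: "\<forall>e\<in>Poly_Mapping.keys p. divG G e"
  have "(\<Sum>e\<in>Poly_Mapping.keys p. Poly_Mapping.single e (Poly_Mapping.lookup p e)) \<in> monomial_ideal G"
    unfolding monomial_ideal_def
  proof (rule ideal_sum[OF is_ideal_gen], simp)
    fix e assume e: "e \<in> Poly_Mapping.keys p"
    then obtain h where h: "h \<in> G" "mdvd h e" using H unfolding divG_def by blast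
    have eq: "e = (e - h) + h"
      using h(2) unfolding mdvd_def by (intro poly_mapping_eqI) (simp add: lookup_add lookup_minus)
    have "Poly_Mapping.single e (Poly_Mapping.lookup p e)
        = Poly_Mapping.single (e - h) (Poly_Mapping.lookup p e) * monom h"
      unfolding monom_def by (subst mult_single) (simp flip: eq)
    moreover have "monom h \<in> gen_ideal (monom ` G)" using h(1) by (intro gen_ideal_base) auto
    ultimately show "Poly_Mapping.single e (Poly_Mapping.lookup p e) \<in> gen_ideal (monom ` G)"
      using is_ideal_gen unfolding is_ideal_def by metis
  qed
  then show "p \<in> monomial_ideal G" using poly_sum_rep[of p] by simp
qed

lemma add_eq_zero_pm: "(l :: 'v \<Rightarrow>\<^sub>0 nat) + q = 0 \<longleftrightarrow> l = 0 \<and> q = 0"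
proof
  assume "l + q = 0"
  then have "\<And>k. Poly_Mapping.lookup l k + Poly_Mapping.lookup q k = 0"
    by (metis lookup_add lookup_zero)
  then show "l = 0 \<and> q = 0" by (auto intro!: poly_mapping_eqI)
qed simp

lemma lookup_mult_monom:
  "Poly_Mapping.lookup ((g :: ('v,'k::field) mpoly) * monom u) (e + u) = Poly_Mapping.lookup g e"
proof -
  have "g * monom u = (\<Sum>x\<in>Poly_Mapping.keys g. Poly_Mapping.single x (Poly_Mapping.lookup g x)) * monom u"
    using poly_sum_rep[of g] by simp
  also have "\<dots> = (\<Sum>x\<in>Poly_Mapping.keys g. Poly_Mapping.single (x + u) (Poly_Mapping.lookup g x))"
    by (simp add: sum_distrib_right monom_def mult_single)
  finally have "Poly_Mapping.lookup (g * monom u) (e + u)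
     = (\<Sum>x\<in>Poly_Mapping.keys g. if x = e then Poly_Mapping.lookup g x else 0)"
    by (simp add: lookup_sum lookup_single when_def)
  then show ?thesis by (simp add: sum.delta in_keys_iff)
qed

lemma keys_mult_monom:
  "Poly_Mapping.keys ((g :: ('v,'k::field) mpoly) * monom u) = (\<lambda>e. e + u) ` Poly_Mapping.keys g"
proof
  show "Poly_Mapping.keys (g * monom u) \<subseteq> (\<lambda>e. e + u) ` Poly_Mapping.keys g"
    using keys_mult[of g "monom u"] by (auto simp: monom_def)
  show "(\<lambda>e. e + u) ` Poly_Mapping.keys g \<subseteq> Poly_Mapping.keys (g * monom u)"
    using lookup_mult_monom[of g u] by (auto simp: in_keys_iff)
qed

lemma zero_eq_add_pm: "0 = (l :: 'v \<Rightarrow>\<^sub>0 nat) + q \<longleftrightarrow> l = 0 \<and> q = 0"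
  by (metis add_eq_zero_pm)

lemma single_nz: "Poly_Mapping.single v (1::nat) \<noteq> 0"
  by (metis lookup_single_eq lookup_zero one_neq_zero)

lemma lookup_mult_zero:
  "Poly_Mapping.lookup ((a :: ('v,'k::field) mpoly) * b) 0 = Poly_Mapping.lookup a 0 * Poly_Mapping.lookup b 0"
proof -
  have inner: "(\<lambda>q. Poly_Mapping.lookup b q when 0 = l + q) = (\<lambda>q. (Poly_Mapping.lookup b 0 when l = 0) when q = 0)"
    for l :: "'v \<Rightarrow>\<^sub>0 nat"
    by (rule ext) (simp only: zero_eq_add_pm when_def, auto)
  have "(\<lambda>l. Poly_Mapping.lookup a l * (\<Sum>q. Poly_Mapping.lookup b q when 0 = l + q))
      = (\<lambda>l. Poly_Mapping.lookup a 0 * Poly_Mapping.lookup b 0 when l = 0)"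
    by (rule ext) (simp only: inner Sum_any_when_equal, simp add: when_def)
  then show ?thesis by (simp only: lookup_mult Sum_any_when_equal)
qed

lemma mem_max_ideal:
  "(p :: ('v,'k::field) mpoly) \<in> max_ideal UNIV \<longleftrightarrow> Poly_Mapping.lookup p 0 = 0"
proof -
  have eq: "max_ideal UNIV = (monomial_ideal (range (\<lambda>v. Poly_Mapping.single v 1)) :: ('v,'k) mpoly set)"
    unfolding max_ideal_def monomial_ideal_def var_def by (simp add: image_image)
  have d: "divG (range (\<lambda>v. Poly_Mapping.single v 1)) e \<longleftrightarrow> e \<noteq> 0" for e :: "'v \<Rightarrow>\<^sub>0 nat"
  proof
    assume "divG (range (\<lambda>v. Poly_Mapping.single v 1)) e"
    then obtain v where "mdvd (Poly_Mapping.single v 1) e" unfolding divG_def by blast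
    then have "Poly_Mapping.lookup e v \<ge> 1" unfolding mdvd_def by (metis lookup_single_eq)
    then show "e \<noteq> 0" by auto
  next
    assume "e \<noteq> 0"
    then obtain v where "v \<in> Poly_Mapping.keys e" by (metis keys_eq_empty ex_in_conv)
    then have "mdvd (Poly_Mapping.single v 1) e" unfolding mdvd_def
      by (auto simp: lookup_single when_def in_keys_iff)
    then show "divG (range (\<lambda>v. Poly_Mapping.single v 1)) e" unfolding divG_def by blast
  qed
  show ?thesis unfolding eq mem_monomial_ideal d by (auto simp: in_keys_iff)
qed

lemma prime_max: "prime_ideal (max_ideal UNIV :: ('v,'k::field) mpoly set)"
  unfolding prime_ideal_def
proof (intro conjI allI impI)
  show "is_ideal (max_ideal UNIV :: ('v,'k::field) mpoly set)"
    unfolding max_ideal_def by (rule is_ideal_gen)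
  show "max_ideal UNIV \<noteq> (UNIV :: ('v,'k::field) mpoly set)"
    using mem_max_ideal[of "1 :: ('v,'k) mpoly"] by (auto simp: lookup_one)
  fix a b :: "('v,'k) mpoly" assume "a * b \<in> max_ideal UNIV"
  then show "a \<in> max_ideal UNIV \<or> b \<in> max_ideal UNIV"
    by (simp add: mem_max_ideal lookup_mult_zero)
qed

lemma socle_Ass:
  assumes u: "\<not> divG G u" "\<And>v. divG G (u + Poly_Mapping.single v 1)"
  shows "max_ideal UNIV \<in> Ass (monomial_ideal G :: ('v,'k::field) mpoly set)"
  unfolding Ass_def
proof (rule CollectI, intro conjI exI)
  show "prime_ideal (max_ideal UNIV :: ('v,'k::field) mpoly set)" by (rule prime_max)
  show "max_ideal UNIV = {g. g * monom u \<in> (monomial_ideal G :: ('v,'k::field) mpoly set)}"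
  proof (rule set_eqI)
    fix g :: "('v,'k) mpoly"
    have "g * monom u \<in> monomial_ideal G \<longleftrightarrow> (\<forall>e\<in>Poly_Mapping.keys g. divG G (e + u))"
      unfolding mem_monomial_ideal keys_mult_monom by blast
    also have "\<dots> \<longleftrightarrow> Poly_Mapping.lookup g 0 = 0"
    proof
      assume H: "\<forall>e\<in>Poly_Mapping.keys g. divG G (e + u)"
      show "Poly_Mapping.lookup g 0 = 0"
      proof (rule ccontr)
        assume "Poly_Mapping.lookup g 0 \<noteq> 0"
        then have "0 \<in> Poly_Mapping.keys g" by (simp add: in_keys_iff)
        then show False using H u(1) by fastforce
      qed
    next
      assume g0: "Poly_Mapping.lookup g 0 = 0"
      show "\<forall>e\<in>Poly_Mapping.keys g. divG G (e + u)"
      proof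
        fix e assume e: "e \<in> Poly_Mapping.keys g"
        then have "e \<noteq> 0" using g0 by (auto simp: in_keys_iff)
        then obtain v where "v \<in> Poly_Mapping.keys e" by (metis keys_eq_empty ex_in_conv)
        then have "mdvd (u + Poly_Mapping.single v 1) (e + u)" unfolding mdvd_def
          by (auto simp: lookup_single when_def in_keys_iff lookup_add)
        then show "divG G (e + u)" using u(2) divG_mono by blast
      qed
    qed
    finally show "g \<in> max_ideal UNIV \<longleftrightarrow> g \<in> {g. g * monom u \<in> monomial_ideal G}"
      by (simp add: mem_max_ideal)
  qed
qed

lemma Ass_socle:
  assumes "max_ideal UNIV \<in> Ass (monomial_ideal G :: ('v,'k::field) mpoly set)"
  shows "\<exists>u. \<not> divG G u \<and> (\<forall>v. divG G (u + Poly_Mapping.single v 1))"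
proof -
  obtain f :: "('v,'k) mpoly" where f: "max_ideal UNIV = {g. g * f \<in> monomial_ideal G}"
    using assms unfolding Ass_def by blast
  have "(1 :: ('v,'k) mpoly) \<notin> max_ideal UNIV" by (simp add: mem_max_ideal lookup_one)
  then have "f \<notin> monomial_ideal G" using f by auto
  then obtain u where u: "u \<in> Poly_Mapping.keys f" "\<not> divG G u"
    unfolding mem_monomial_ideal by blast
  have "divG G (u + Poly_Mapping.single v 1)" for v
  proof -
    have "(var v :: ('v,'k) mpoly) \<in> max_ideal UNIV"
      using single_nz[of v] by (simp add: mem_max_ideal var_def monom_def lookup_single when_def)
    then have "var v * f \<in> monomial_ideal G" using f by blast
    then have "f * monom (Poly_Mapping.single v 1) \<in> monomial_ideal G"
      by (simp add: var_def mult.commute)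
    then show ?thesis unfolding mem_monomial_ideal keys_mult_monom using u(1) by blast
  qed
  then show ?thesis using u(2) by blast
qed

lemma mdvd_refl: "mdvd a a" unfolding mdvd_def by simp

lemma mdvd_add_mono: "mdvd a b \<Longrightarrow> mdvd (a + c) (b + c)"
  unfolding mdvd_def by (simp add: lookup_add)

lemma greedy:
  assumes fin: "finite (UNIV :: 'v set)"
    and u: "\<not> divG G (u :: 'v \<Rightarrow>\<^sub>0 nat)"
    and rays: "\<And>v. \<exists>n. divG G (u + Poly_Mapping.single v n)"
  shows "\<exists>u'. \<not> divG G u' \<and> (\<forall>v. divG G (u' + Poly_Mapping.single v 1))"
proof -
  have "\<exists>u'. \<not> divG G u' \<and> mdvd u u' \<and> (\<forall>v\<in>V. divG G (u' + Poly_Mapping.single v 1))"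
    if "finite V" for V :: "'v set"
    using that
  proof (induction V rule: finite_induct)
    case empty then show ?case using u mdvd_refl by blast
  next
    case (insert v V)
    then obtain u1 where u1: "\<not> divG G u1" "mdvd u u1" "\<forall>w\<in>V. divG G (u1 + Poly_Mapping.single w 1)"
      by blast
    obtain n where "divG G (u + Poly_Mapping.single v n)" using rays by blast
    then have ex: "divG G (u1 + Poly_Mapping.single v n)"
      using divG_mono mdvd_add_mono[OF u1(2)] by blast
    define n0 where "n0 = (LEAST n. divG G (u1 + Poly_Mapping.single v n))"
    have n0: "divG G (u1 + Poly_Mapping.single v n0)" unfolding n0_def using ex by (rule LeastI)
    have "n0 \<noteq> 0" using n0 u1(1) by (metis add.right_neutral single_zero)
    define u' where "u' = u1 + Poly_Mapping.single v (n0 - 1)"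
    have "\<not> divG G u'" unfolding u'_def n0_def
      by (rule not_less_Least) (use \<open>n0 \<noteq> 0\<close> n0_def in simp)
    moreover have "u' + Poly_Mapping.single v 1 = u1 + Poly_Mapping.single v n0"
      unfolding u'_def using \<open>n0 \<noteq> 0\<close> by (simp add: add.assoc flip: single_add)
    moreover have "mdvd u u'" unfolding u'_def using u1(2) mdvd_add by blast
    moreover have "\<forall>w\<in>V. divG G (u' + Poly_Mapping.single w 1)"
    proof
      fix w assume "w \<in> V"
      then have "divG G (u1 + Poly_Mapping.single w 1)" using u1(3) by blast
      moreover have "mdvd (u1 + Poly_Mapping.single w 1) (u' + Poly_Mapping.single w 1)"
        unfolding u'_def by (rule mdvd_add_mono, rule mdvd_add, rule mdvd_refl)
      ultimately show "divG G (u' + Poly_Mapping.single w 1)" using divG_mono by blast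
    qed
    ultimately show ?case using n0 by auto
  qed
  from this[OF fin] show ?thesis by blast
qed

lemma mdvd2:
  assumes "Poly_Mapping.keys h = {a, b}"
  shows "mdvd h u \<longleftrightarrow> Poly_Mapping.lookup h a \<le> Poly_Mapping.lookup u a \<and> Poly_Mapping.lookup h b \<le> Poly_Mapping.lookup u b"
  unfolding mdvd_def
proof
  assume "\<forall>v. Poly_Mapping.lookup h v \<le> Poly_Mapping.lookup u v"
  then show "Poly_Mapping.lookup h a \<le> Poly_Mapping.lookup u a \<and> Poly_Mapping.lookup h b \<le> Poly_Mapping.lookup u b" by blast
next
  assume H: "Poly_Mapping.lookup h a \<le> Poly_Mapping.lookup u a \<and> Poly_Mapping.lookup h b \<le> Poly_Mapping.lookup u b"
  show "\<forall>v. Poly_Mapping.lookup h v \<le> Poly_Mapping.lookup u v"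
  proof
    fix v
    show "Poly_Mapping.lookup h v \<le> Poly_Mapping.lookup u v"
    proof (cases "v = a \<or> v = b")
      case True then show ?thesis using H by auto
    next
      case False
      then have "v \<notin> Poly_Mapping.keys h" using assms by blast
      then have "Poly_Mapping.lookup h v = 0" by (simp add: in_keys_iff)
      then show ?thesis by simp
    qed
  qed
qed

lemma lookup_pos: "Poly_Mapping.keys (h :: 'v \<Rightarrow>\<^sub>0 nat) = {a, b} \<Longrightarrow> Poly_Mapping.lookup h a > 0 \<and> Poly_Mapping.lookup h b > 0"
proof -
  assume "Poly_Mapping.keys h = {a, b}"
  then have "a \<in> Poly_Mapping.keys h" "b \<in> Poly_Mapping.keys h" by auto
  then show ?thesis by (simp add: in_keys_iff)
qed

lemma lookup_out: "Poly_Mapping.keys (h :: 'v \<Rightarrow>\<^sub>0 nat) = {a, b} \<Longrightarrow> c \<noteq> a \<Longrightarrow> c \<noteq> b \<Longrightarrow> Poly_Mapping.lookup h c = 0"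
proof -
  assume "Poly_Mapping.keys h = {a, b}" "c \<noteq> a" "c \<noteq> b"
  then have "c \<notin> Poly_Mapping.keys h" by auto
  then show ?thesis by (simp add: in_keys_iff)
qed


lemma ray_ok:
  assumes "h \<in> G" "\<forall>w\<in>Poly_Mapping.keys h. w \<noteq> v \<longrightarrow> Poly_Mapping.lookup h w \<le> Poly_Mapping.lookup u w"
  shows "\<exists>n. divG G (u + Poly_Mapping.single v n)"
proof -
  have "mdvd h (u + Poly_Mapping.single v (Poly_Mapping.lookup h v))"
    unfolding mdvd_def
  proof
    fix w show "Poly_Mapping.lookup h w \<le> Poly_Mapping.lookup (u + Poly_Mapping.single v (Poly_Mapping.lookup h v)) w"
      using assms(2) by (cases "w = v"; cases "w \<in> Poly_Mapping.keys h")
        (auto simp: lookup_add lookup_single when_def in_keys_iff)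
  qed
  then show ?thesis using assms(1) unfolding divG_def by blast
qed

lemma A1:
  assumes mg: "minimal_gens G" and al: "alpha G x y \<ge> 2"
  shows "\<exists>g0\<in>G. Poly_Mapping.keys g0 = {x, y} \<and>
     (\<forall>e\<in>G. Poly_Mapping.keys e = {x, y} \<and> e \<noteq> g0 \<longrightarrow>
         Poly_Mapping.lookup g0 x < Poly_Mapping.lookup e x \<and> Poly_Mapping.lookup e y < Poly_Mapping.lookup g0 y) \<and>
     (\<exists>g'\<in>G. Poly_Mapping.keys g' = {x, y} \<and> g' \<noteq> g0)"
proof -
  let ?E = "{e\<in>G. Poly_Mapping.keys e = {x, y}}"
  have cE: "card ?E \<ge> 2" using al unfolding alpha_def .
  then have "?E \<noteq> {}" by (metis card.empty not_numeral_le_zero)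
  then obtain e1 where "e1 \<in> ?E" by blast
  then obtain g0 where g0: "g0 \<in> ?E" "\<forall>e. e \<in> ?E \<longrightarrow> Poly_Mapping.lookup g0 x \<le> Poly_Mapping.lookup e x"
    using ex_has_least_nat[of "\<lambda>e. e \<in> ?E" e1 "\<lambda>e. Poly_Mapping.lookup e x"] by blast
  have anti: "\<And>e f. e \<in> G \<Longrightarrow> f \<in> G \<Longrightarrow> mdvd e f \<Longrightarrow> e = f" using mg unfolding minimal_gens_def by blast
  have others: "Poly_Mapping.lookup g0 x < Poly_Mapping.lookup e x \<and> Poly_Mapping.lookup e y < Poly_Mapping.lookup g0 y"
    if e: "e \<in> G" "Poly_Mapping.keys e = {x, y}" "e \<noteq> g0" for e
  proof -
    have le: "Poly_Mapping.lookup g0 x \<le> Poly_Mapping.lookup e x" using g0 e by blast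
    have d1: "\<not> mdvd g0 e" using anti e g0 by blast
    have d2: "\<not> mdvd e g0" using anti e g0 by blast
    have k0: "Poly_Mapping.keys g0 = {x, y}" using g0(1) by blast
    have n1: "\<not> (Poly_Mapping.lookup g0 x \<le> Poly_Mapping.lookup e x \<and> Poly_Mapping.lookup g0 y \<le> Poly_Mapping.lookup e y)"
      using d1 mdvd2[OF k0, of e] by simp
    have n2: "\<not> (Poly_Mapping.lookup e x \<le> Poly_Mapping.lookup g0 x \<and> Poly_Mapping.lookup e y \<le> Poly_Mapping.lookup g0 y)"
      using d2 mdvd2[OF e(2), of g0] by simp
    show ?thesis using n1 n2 le by linarith
  qed
  have "\<not> ?E \<subseteq> {g0}"
  proof
    assume "?E \<subseteq> {g0}"
    then have "card ?E \<le> card {g0}" by (intro card_mono) auto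
    then show False using cE by simp
  qed
  then obtain g' where "g' \<in> ?E" "g' \<noteq> g0" by blast
  then show ?thesis using g0(1) others by blast
qed

lemma A2:
  assumes U: "(UNIV :: 'v set) = {x, y, z}"
    and dist: "x \<noteq> y" "y \<noteq> z" "x \<noteq> z"
    and K: "\<forall>e\<in>G. Poly_Mapping.keys e = {x, y} \<or> Poly_Mapping.keys e = {y, z} \<or> Poly_Mapping.keys e = {x, z}"
    and g0: "g0 \<in> G" "Poly_Mapping.keys g0 = {x, y}"
       "\<forall>e\<in>G. Poly_Mapping.keys e = {x, y} \<and> e \<noteq> g0 \<longrightarrow>
         Poly_Mapping.lookup g0 x < Poly_Mapping.lookup e x \<and> Poly_Mapping.lookup e y < Poly_Mapping.lookup g0 y"
       "g' \<in> G" "Poly_Mapping.keys g' = {x, y}" "g' \<noteq> g0"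
    and h: "h \<in> G" "(Poly_Mapping.keys h = {y, z} \<and> Poly_Mapping.lookup h y < Poly_Mapping.lookup g0 y)
       \<or> (Poly_Mapping.keys h = {x, z} \<and> Poly_Mapping.lookup h x \<le> Poly_Mapping.lookup g0 x)"
  shows "\<exists>u. \<not> divG G (u :: 'v \<Rightarrow>\<^sub>0 nat) \<and> (\<forall>v. \<exists>n. divG G (u + Poly_Mapping.single v n))"
proof -
  define u where "u = Poly_Mapping.single x (Poly_Mapping.lookup g0 x) + Poly_Mapping.single y (Poly_Mapping.lookup g0 y - 1)"
  have ux: "Poly_Mapping.lookup u x = Poly_Mapping.lookup g0 x"
    and uy: "Poly_Mapping.lookup u y = Poly_Mapping.lookup g0 y - 1"
    and uz: "Poly_Mapping.lookup u z = 0"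
    using dist unfolding u_def by (auto simp: lookup_add lookup_single when_def)
  have g0y: "Poly_Mapping.lookup g0 y > 0" using lookup_pos[OF g0(2)] by blast
  have "\<not> divG G u"
  proof
    assume "divG G u"
    then obtain e where e: "e \<in> G" "mdvd e u" unfolding divG_def by blast
    from K e(1) consider "Poly_Mapping.keys e = {x, y}" | "Poly_Mapping.keys e = {y, z}" | "Poly_Mapping.keys e = {x, z}"
      by blast
    then show False
    proof cases
      case 1
      show False
      proof (cases "e = g0")
        case True
        have "Poly_Mapping.lookup e y \<le> Poly_Mapping.lookup u y" using e(2) mdvd2[OF 1] by blast
        then show False using True uy g0y by simp
      next
        case False
        have "Poly_Mapping.lookup g0 x < Poly_Mapping.lookup e x" using g0(3) e(1) 1 False by blast
        moreover have "Poly_Mapping.lookup e x \<le> Poly_Mapping.lookup u x" using e(2) mdvd2[OF 1] by blast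
        ultimately show False using ux by simp
      qed
    next
      case 2
      have "Poly_Mapping.lookup e z \<le> Poly_Mapping.lookup u z" using e(2) mdvd2[OF 2] by blast
      then show False using uz lookup_pos[OF 2] by simp
    next
      case 3
      have "Poly_Mapping.lookup e z \<le> Poly_Mapping.lookup u z" using e(2) mdvd2[OF 3] by blast
      then show False using uz lookup_pos[OF 3] by simp
    qed
  qed
  moreover have "\<exists>n. divG G (u + Poly_Mapping.single v n)" for v
  proof -
    have "v = x \<or> v = y \<or> v = z" using U by auto
    moreover have "\<exists>n. divG G (u + Poly_Mapping.single x n)"
    proof (rule ray_ok[OF g0(4)])
      have "Poly_Mapping.lookup g' y < Poly_Mapping.lookup g0 y" using g0(3) g0(4-6) by blast
      then show "\<forall>w\<in>Poly_Mapping.keys g'. w \<noteq> x \<longrightarrow> Poly_Mapping.lookup g' w \<le> Poly_Mapping.lookup u w"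
        using g0(5) uy by auto
    qed
    moreover have "\<exists>n. divG G (u + Poly_Mapping.single y n)"
    proof (rule ray_ok[OF g0(1)])
      show "\<forall>w\<in>Poly_Mapping.keys g0. w \<noteq> y \<longrightarrow> Poly_Mapping.lookup g0 w \<le> Poly_Mapping.lookup u w"
        using g0(2) ux by auto
    qed
    moreover have "\<exists>n. divG G (u + Poly_Mapping.single z n)"
    proof (rule ray_ok[OF h(1)])
      show "\<forall>w\<in>Poly_Mapping.keys h. w \<noteq> z \<longrightarrow> Poly_Mapping.lookup h w \<le> Poly_Mapping.lookup u w"
        using h(2) ux uy by auto
    qed
    ultimately show ?thesis by blast
  qed
  ultimately show ?thesis by blast
qed

lemma mu_eq:
  assumes fin: "finite G" and g0: "g0 \<in> G" "Poly_Mapping.keys g0 = {x, y}"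
       "\<forall>e\<in>G. Poly_Mapping.keys e = {x, y} \<and> e \<noteq> g0 \<longrightarrow>
         Poly_Mapping.lookup g0 x < Poly_Mapping.lookup e x \<and> Poly_Mapping.lookup e y < Poly_Mapping.lookup g0 y"
  shows "mu G y x = Poly_Mapping.lookup g0 y"
  unfolding mu_def
proof (rule Max_eqI)
  have "{Poly_Mapping.lookup e y |e. e \<in> G \<and> Poly_Mapping.keys e = {y, x}}
      = (\<lambda>e. Poly_Mapping.lookup e y) ` {e\<in>G. Poly_Mapping.keys e = {y, x}}" by blast
  then show "finite {Poly_Mapping.lookup e y |e. e \<in> G \<and> Poly_Mapping.keys e = {y, x}}"
    using fin by simp
  show "Poly_Mapping.lookup g0 y \<in> {Poly_Mapping.lookup e y |e. e \<in> G \<and> Poly_Mapping.keys e = {y, x}}"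
    using g0(1,2) by (auto simp: insert_commute)
  fix a assume "a \<in> {Poly_Mapping.lookup e y |e. e \<in> G \<and> Poly_Mapping.keys e = {y, x}}"
  then show "a \<le> Poly_Mapping.lookup g0 y" using g0(3) by (fastforce simp: insert_commute)
qed

lemma rays_Ass:
  assumes "finite (UNIV :: 'v set)" "\<not> divG G (u :: 'v \<Rightarrow>\<^sub>0 nat)"
    "\<forall>v. \<exists>n. divG G (u + Poly_Mapping.single v n)"
  shows "max_ideal UNIV \<in> Ass (monomial_ideal G :: ('v,'k::field) mpoly set)"
proof -
  obtain u' where "\<not> divG G u'" "\<forall>v. divG G (u' + Poly_Mapping.single v 1)"
    using greedy[OF assms(1,2)] assms(3) by blast
  then show ?thesis using socle_Ass by blast
qed

lemma lk: "Poly_Mapping.lookup (u + Poly_Mapping.single v n) w = Poly_Mapping.lookup u w + (if v = w then n else 0)"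
  by (simp add: lookup_add lookup_single when_def)

lemma alpha_comm: "alpha G a b = alpha G b a"
  unfolding alpha_def by (simp add: insert_commute)

lemma single_gen:
  assumes "alpha G a b = 1"
  shows "\<exists>f. {e\<in>G. Poly_Mapping.keys e = {a, b}} = {f} \<and> w1 G a b = Poly_Mapping.lookup f a"
proof -
  obtain f where f: "{e\<in>G. Poly_Mapping.keys e = {a, b}} = {f}"
    using assms unfolding alpha_def by (rule card_1_singletonE)
  have "(THE e. e \<in> G \<and> Poly_Mapping.keys e = {a, b}) = f"
    using f by (intro the_equality) blast+
  then show ?thesis using f unfolding w1_def by auto
qed

theorem proposition4p8:
  fixes G :: "('v \<Rightarrow>\<^sub>0 nat) set" and i j k :: 'v
  assumes vars: "(UNIV :: 'v set) = {i, j, k}"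
    and dist: "i \<noteq> j" "j \<noteq> k" "i \<noteq> k"
    and mingens: "minimal_gens G"
    and supp2: "support2 G"
    and cycle: "edges G = {{i, j}, {j, k}, {i, k}}"
  shows "(alpha G i j \<ge> 2 \<and> alpha G j k \<ge> 2 \<longrightarrow>
            max_ideal UNIV \<in> Ass (monomial_ideal G :: ('v, 'K::field) mpoly set))
       \<and> (alpha G i k = 1 \<and> alpha G j k = 1 \<and> alpha G i j \<ge> 2 \<longrightarrow>
            (max_ideal UNIV \<notin> Ass (monomial_ideal G :: ('v, 'K::field) mpoly set)
             \<longleftrightarrow> w1 G i k \<ge> mu G i j \<and> w1 G j k \<ge> mu G j i))"
proof -
  have fin: "finite G" using mingens unfolding minimal_gens_def by blast
  have finU: "finite (UNIV :: 'v set)" by (subst vars) simp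
  have K: "\<forall>e\<in>G. Poly_Mapping.keys e = {i, j} \<or> Poly_Mapping.keys e = {j, k} \<or> Poly_Mapping.keys e = {i, k}"
  proof
    fix e assume "e \<in> G"
    then have "Poly_Mapping.keys e \<in> edges G" unfolding edges_def by blast
    then show "Poly_Mapping.keys e = {i, j} \<or> Poly_Mapping.keys e = {j, k} \<or> Poly_Mapping.keys e = {i, k}"
      using cycle by blast
  qed
  have partA: "max_ideal UNIV \<in> Ass (monomial_ideal G :: ('v, 'K::field) mpoly set)"
    if a1: "alpha G i j \<ge> 2" and a2: "alpha G j k \<ge> 2"
  proof -
    obtain g0 g' where g0: "g0 \<in> G" "Poly_Mapping.keys g0 = {i, j}"
       "\<forall>e\<in>G. Poly_Mapping.keys e = {i, j} \<and> e \<noteq> g0 \<longrightarrow>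
         Poly_Mapping.lookup g0 i < Poly_Mapping.lookup e i \<and> Poly_Mapping.lookup e j < Poly_Mapping.lookup g0 j"
       "g' \<in> G" "Poly_Mapping.keys g' = {i, j}" "g' \<noteq> g0"
      using A1[OF mingens a1] by blast
    have a2': "alpha G k j \<ge> 2" using a2 alpha_comm by metis
    obtain g1 g'' where g1: "g1 \<in> G" "Poly_Mapping.keys g1 = {k, j}"
       "\<forall>e\<in>G. Poly_Mapping.keys e = {k, j} \<and> e \<noteq> g1 \<longrightarrow>
         Poly_Mapping.lookup g1 k < Poly_Mapping.lookup e k \<and> Poly_Mapping.lookup e j < Poly_Mapping.lookup g1 j"
       "g'' \<in> G" "Poly_Mapping.keys g'' = {k, j}" "g'' \<noteq> g1"
      using A1[OF mingens a2'] by blast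
    have g''j: "Poly_Mapping.lookup g'' j < Poly_Mapping.lookup g1 j" using g1 by blast
    have "\<exists>u. \<not> divG G (u :: 'v \<Rightarrow>\<^sub>0 nat) \<and> (\<forall>v. \<exists>n. divG G (u + Poly_Mapping.single v n))"
    proof (cases "Poly_Mapping.lookup g'' j < Poly_Mapping.lookup g0 j")
      case True
      show ?thesis
      proof (rule A2[OF vars dist K g0 g1(4)])
        show "Poly_Mapping.keys g'' = {j, k} \<and> Poly_Mapping.lookup g'' j < Poly_Mapping.lookup g0 j
          \<or> Poly_Mapping.keys g'' = {i, k} \<and> Poly_Mapping.lookup g'' i \<le> Poly_Mapping.lookup g0 i"
          using True g1(5) by (auto simp: insert_commute)
      qed
    next
      case False
      have vars': "(UNIV :: 'v set) = {k, j, i}" using vars by auto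
      have K': "\<forall>e\<in>G. Poly_Mapping.keys e = {k, j} \<or> Poly_Mapping.keys e = {j, i} \<or> Poly_Mapping.keys e = {k, i}"
        using K by (auto simp: insert_commute)
      show ?thesis
      proof (rule A2[OF vars' _ _ _ K' g1 g0(1)])
        show "k \<noteq> j" "j \<noteq> i" "k \<noteq> i" using dist by auto
        show "Poly_Mapping.keys g0 = {j, i} \<and> Poly_Mapping.lookup g0 j < Poly_Mapping.lookup g1 j
          \<or> Poly_Mapping.keys g0 = {k, i} \<and> Poly_Mapping.lookup g0 k \<le> Poly_Mapping.lookup g1 k"
          using False g''j g0(2) by (auto simp: insert_commute)
      qed
    qed
    then show ?thesis using rays_Ass[OF finU] by blast
  qed
  have partB: "max_ideal UNIV \<notin> Ass (monomial_ideal G :: ('v, 'K::field) mpoly set)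
             \<longleftrightarrow> w1 G i k \<ge> mu G i j \<and> w1 G j k \<ge> mu G j i"
    if b1: "alpha G i k = 1" and b2: "alpha G j k = 1" and b3: "alpha G i j \<ge> 2"
  proof -
    obtain f where f: "{e\<in>G. Poly_Mapping.keys e = {i, k}} = {f}" "w1 G i k = Poly_Mapping.lookup f i"
      using single_gen[OF b1] by blast
    obtain hh where hh: "{e\<in>G. Poly_Mapping.keys e = {j, k}} = {hh}" "w1 G j k = Poly_Mapping.lookup hh j"
      using single_gen[OF b2] by blast
    have b3': "alpha G j i \<ge> 2" using b3 alpha_comm by metis
    obtain ga ga' where ga: "ga \<in> G" "Poly_Mapping.keys ga = {j, i}"
       "\<forall>e\<in>G. Poly_Mapping.keys e = {j, i} \<and> e \<noteq> ga \<longrightarrow>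
         Poly_Mapping.lookup ga j < Poly_Mapping.lookup e j \<and> Poly_Mapping.lookup e i < Poly_Mapping.lookup ga i"
       "ga' \<in> G" "Poly_Mapping.keys ga' = {j, i}" "ga' \<noteq> ga"
      using A1[OF mingens b3'] by blast
    obtain gb gb' where gb: "gb \<in> G" "Poly_Mapping.keys gb = {i, j}"
       "\<forall>e\<in>G. Poly_Mapping.keys e = {i, j} \<and> e \<noteq> gb \<longrightarrow>
         Poly_Mapping.lookup gb i < Poly_Mapping.lookup e i \<and> Poly_Mapping.lookup e j < Poly_Mapping.lookup gb j"
       "gb' \<in> G" "Poly_Mapping.keys gb' = {i, j}" "gb' \<noteq> gb"
      using A1[OF mingens b3] by blast
    have mu1: "mu G i j = Poly_Mapping.lookup ga i" using mu_eq[OF fin ga(1-3)] .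
    have mu2: "mu G j i = Poly_Mapping.lookup gb j" using mu_eq[OF fin gb(1-3)] .
    have fG: "f \<in> G" "Poly_Mapping.keys f = {i, k}" using f(1) by blast+
    have hG: "hh \<in> G" "Poly_Mapping.keys hh = {j, k}" using hh(1) by blast+
    show ?thesis
    proof
      assume nA: "max_ideal UNIV \<notin> Ass (monomial_ideal G :: ('v, 'K::field) mpoly set)"
      have c1: "Poly_Mapping.lookup ga i \<le> Poly_Mapping.lookup f i"
      proof (rule ccontr)
        assume lt: "\<not> ?thesis"
        have vars': "(UNIV :: 'v set) = {j, i, k}" using vars by auto
        have K': "\<forall>e\<in>G. Poly_Mapping.keys e = {j, i} \<or> Poly_Mapping.keys e = {i, k} \<or> Poly_Mapping.keys e = {j, k}"
          using K by (auto simp: insert_commute)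
        have "\<exists>u. \<not> divG G (u :: 'v \<Rightarrow>\<^sub>0 nat) \<and> (\<forall>v. \<exists>n. divG G (u + Poly_Mapping.single v n))"
        proof (rule A2[OF vars' _ _ _ K' ga fG(1)])
          show "j \<noteq> i" "i \<noteq> k" "j \<noteq> k" using dist by auto
          show "Poly_Mapping.keys f = {i, k} \<and> Poly_Mapping.lookup f i < Poly_Mapping.lookup ga i
            \<or> Poly_Mapping.keys f = {j, k} \<and> Poly_Mapping.lookup f j \<le> Poly_Mapping.lookup ga j"
            using lt fG(2) by auto
        qed
        then show False using rays_Ass[OF finU] nA by blast
      qed
      have c2: "Poly_Mapping.lookup gb j \<le> Poly_Mapping.lookup hh j"
      proof (rule ccontr)
        assume lt: "\<not> ?thesis"
        have "\<exists>u. \<not> divG G (u :: 'v \<Rightarrow>\<^sub>0 nat) \<and> (\<forall>v. \<exists>n. divG G (u + Poly_Mapping.single v n))"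
        proof (rule A2[OF vars dist K gb hG(1)])
          show "Poly_Mapping.keys hh = {j, k} \<and> Poly_Mapping.lookup hh j < Poly_Mapping.lookup gb j
            \<or> Poly_Mapping.keys hh = {i, k} \<and> Poly_Mapping.lookup hh i \<le> Poly_Mapping.lookup gb i"
            using lt hG(2) by auto
        qed
        then show False using rays_Ass[OF finU] nA by blast
      qed
      show "w1 G i k \<ge> mu G i j \<and> w1 G j k \<ge> mu G j i"
        using c1 c2 mu1 mu2 f(2) hh(2) by simp
    next
      assume cond: "w1 G i k \<ge> mu G i j \<and> w1 G j k \<ge> mu G j i"
      then have c1: "Poly_Mapping.lookup ga i \<le> Poly_Mapping.lookup f i"
        and c2: "Poly_Mapping.lookup gb j \<le> Poly_Mapping.lookup hh j"
        using mu1 mu2 f(2) hh(2) by simp_all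
      show "max_ideal UNIV \<notin> Ass (monomial_ideal G :: ('v, 'K::field) mpoly set)"
      proof
        assume "max_ideal UNIV \<in> Ass (monomial_ideal G :: ('v, 'K::field) mpoly set)"
        then obtain u where u: "\<not> divG G u" "\<forall>v. divG G (u + Poly_Mapping.single v 1)"
          using Ass_socle by blast
        let ?L = "Poly_Mapping.lookup u"
        have dv: False if "h \<in> G" "Poly_Mapping.lookup h i \<le> ?L i" "Poly_Mapping.lookup h j \<le> ?L j"
            "Poly_Mapping.lookup h k \<le> ?L k" for h
        proof -
          have "mdvd h u" unfolding mdvd_def
          proof
            fix v show "Poly_Mapping.lookup h v \<le> ?L v"
              using that vars by (cases "v = i"; cases "v = j"; cases "v = k") auto
          qed
          then show False using u(1) that(1) unfolding divG_def by blast
        qed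
        have fi: "e = f" if "e \<in> G" "Poly_Mapping.keys e = {i, k}" for e using f(1) that by blast
        have hj: "e = hh" if "e \<in> G" "Poly_Mapping.keys e = {j, k}" for e using hh(1) that by blast
        have ijb: "Poly_Mapping.lookup e i \<le> Poly_Mapping.lookup ga i \<and> Poly_Mapping.lookup e j \<le> Poly_Mapping.lookup gb j"
          if "e \<in> G" "Poly_Mapping.keys e = {i, j}" for e
        proof -
          have "Poly_Mapping.keys e = {j, i}" using that(2) by (simp add: insert_commute)
          then have "Poly_Mapping.lookup e i \<le> Poly_Mapping.lookup ga i" using ga(3) that(1)
            by (cases "e = ga") auto
          moreover have "Poly_Mapping.lookup e j \<le> Poly_Mapping.lookup gb j" using gb(3) that
            by (cases "e = gb") auto
          ultimately show ?thesis by blast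
        qed
        obtain h1 where h1: "h1 \<in> G" "mdvd h1 (u + Poly_Mapping.single k 1)"
          using u(2) unfolding divG_def by blast
        from K h1(1) consider "Poly_Mapping.keys h1 = {i, j}" | "Poly_Mapping.keys h1 = {j, k}" | "Poly_Mapping.keys h1 = {i, k}"
          by blast
        then show False
        proof cases
          case 1
          then show False using h1 mdvd2[OF 1] dv[OF h1(1)] lookup_out[OF 1, of k] dist by (simp add: lk)
        next
          case 2
          then have "h1 = hh" using hj h1(1) by blast
          then have hjL: "Poly_Mapping.lookup hh j \<le> ?L j" using h1(2) mdvd2[OF hG(2)] dist by (simp add: lk)
          obtain h2 where h2: "h2 \<in> G" "mdvd h2 (u + Poly_Mapping.single j 1)"
            using u(2) unfolding divG_def by blast
          from K h2(1) consider "Poly_Mapping.keys h2 = {i, j}" | "Poly_Mapping.keys h2 = {j, k}" | "Poly_Mapping.keys h2 = {i, k}"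
            by blast
          then show False
          proof cases
            case 1
            then show False using h2 mdvd2[OF 1] dv[OF h2(1)] lookup_out[OF 1, of k] dist ijb[OF h2(1) 1] c2 hjL
              by (simp add: lk)
          next
            case 2
            then have "h2 = hh" using hj h2(1) by blast
            then show False using h2 mdvd2[OF hG(2)] dv[OF h2(1)] lookup_out[OF hG(2), of i] dist hjL
              by (simp add: lk)
          next
            case 3
            then show False using h2 mdvd2[OF 3] dv[OF h2(1)] lookup_out[OF 3, of j] dist by (simp add: lk)
          qed
        next
          case 3
          then have "h1 = f" using fi h1(1) by blast
          then have fiL: "Poly_Mapping.lookup f i \<le> ?L i" using h1(2) mdvd2[OF fG(2)] dist by (simp add: lk)
          obtain h2 where h2: "h2 \<in> G" "mdvd h2 (u + Poly_Mapping.single i 1)"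
            using u(2) unfolding divG_def by blast
          from K h2(1) consider "Poly_Mapping.keys h2 = {i, j}" | "Poly_Mapping.keys h2 = {j, k}" | "Poly_Mapping.keys h2 = {i, k}"
            by blast
          then show False
          proof cases
            case 1
            then show False using h2 mdvd2[OF 1] dv[OF h2(1)] lookup_out[OF 1, of k] dist ijb[OF h2(1) 1] c1 fiL
              by (simp add: lk)
          next
            case 2
            then show False using h2 mdvd2[OF 2] dv[OF h2(1)] lookup_out[OF 2, of i] dist by (simp add: lk)
          next
            case 3
            then have "h2 = f" using fi h2(1) by blast
            then show False using h2 mdvd2[OF fG(2)] dv[OF h2(1)] lookup_out[OF fG(2), of j] dist fiL
              by (simp add: lk)
          qed
        qed
      qed
    qed
  qed
  show ?thesis using partA partB by blast
qed

end
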